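(* Every $\mathcal C$-pair is an augmentation of a basic $\mathcal C$-pair along an acceptable matching.
   Context: $\mathcal C$ is the class of $(P_4,C_4,2P_3)$-free graphs. For a $(P_4,C_4)$-free graph $H$ define a rooted forest $T(H)$ whose nodes are cliques partitioning $V(H)$: if $H$ is disconnected, $T(H)$ is the union of the trees of its components; if $H$ is connected and a clique, $T(H)$ is the single node $V(H)$; otherwise the set $U(H)$ of universal vertices of $H$ is non-empty, and $T(H)$ has root $U(H)$ whose children are the roots of $T(H_1),\dots,T(H_k)$ where $H_1,\dots,H_k$ are the components of $H\setminus U(H)$. A vertex $y$ is a descendant of $x$ if the node containing $y$ is a proper descendant of the node containing $x$. A member $H$ of $\mathcal C$ is basic if every node of $T(H)$ has size 1. A graph $G$ is a $\mathcal C$-pair if $G$ is $P_6$-free and chordal and $V(G)$ is partitioned into sets $X,A$ such that $A$ is a clique, $G[X]\in\mathcal C$, every vertex of $X$ has a neighbor in $A$, and any two non-adjacent vertices of $X$ have no common neighbor in $A$. $G$ is a basic $\mathcal C$-pair if $V(G)=X\cup A$ where $G[X]$ is a basic member of $\mathcal C$ with vertices $x_1,\dots,x_k$, $A=\{a_0,a_1,\dots,a_k\}$ is a clique, and for each $i$: if $x_i$ is simplicial in $G[X]$ then $N_A(x_i)=\{a_i\}$, and otherwise $N_A(x_i)$ is $\{a_i\}$ together with the union of $N_A(y)$ over all descendants $y$ of $x_i$ in $T(G[X])$. In a basic $\mathcal C$-pair a matching $M$ is acceptable if there is a clique $\{x_{i_1},\dots,x_{i_h}\}$ of $G[X]$ with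 $M=\{x_{i_1}a_{i_1},\dots,x_{i_h}a_{i_h}\}$. Two disjoint sets $P,R$ form a graded pair if for any $p,p'\in P$, $N(p)\cap R\subseteq N(p')\cap R$ or $N(p')\cap R\subseteq N(p)\cap R$. Given a graph $H$ and a matching $M$ of $H$, an augmentation of $H$ along $M$ is any graph whose vertex set is partitioned into $|V(H)|$ cliques $Q_v$ ($v\in V(H)$) such that $Q_u$ is complete to $Q_v$ if $uv\in E(H)\setminus M$, there are no edges between $Q_u$ and $Q_v$ if $uv\notin E(H)$, and $\{Q_u,Q_v\}$ is a graded pair if $uv\in M$. *)

theory Defs
  imports Main
begin

definition graph :: "'a set \<Rightarrow> ('a \<Rightarrow> 'a \<Rightarrow> bool) \<Rightarrow> bool" where
  "graph V E \<longleftrightarrow> finite V \<and> (\<forall>u v. E u v \<longrightarrow> u \<in> V \<and> v \<in> V \<and> u \<noteq> v \<and> E v u)"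

definition has_induced :: "'a set \<Rightarrow> ('a \<Rightarrow> 'a \<Rightarrow> bool) \<Rightarrow> nat \<Rightarrow> (nat \<Rightarrow> nat \<Rightarrow> bool) \<Rightarrow> bool" where
  "has_induced S E n R \<longleftrightarrow> (\<exists>f. inj_on f {..<n} \<and> f ` {..<n} \<subseteq> S \<and>
      (\<forall>i<n. \<forall>j<n. i \<noteq> j \<longrightarrow> (E (f i) (f j) \<longleftrightarrow> R i j)))"

definition path_rel :: "nat \<Rightarrow> nat \<Rightarrow> bool" where
  "path_rel i j \<longleftrightarrow> i + 1 = j \<or> j + 1 = i"

definition cycle_rel :: "nat \<Rightarrow> nat \<Rightarrow> nat \<Rightarrow> bool" where
  "cycle_rel n i j \<longleftrightarrow> i + 1 = j \<or> j + 1 = i \<or> (i = 0 \<and> j = n - 1) \<or> (j = 0 \<and> i = n - 1)"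

definition twoP3_rel :: "nat \<Rightarrow> nat \<Rightarrow> bool" where
  "twoP3_rel i j \<longleftrightarrow> path_rel i j \<and> ((i < 3 \<and> j < 3) \<or> (3 \<le> i \<and> 3 \<le> j))"

definition P_free :: "nat \<Rightarrow> 'a set \<Rightarrow> ('a \<Rightarrow> 'a \<Rightarrow> bool) \<Rightarrow> bool" where
  "P_free n S E \<longleftrightarrow> \<not> has_induced S E n path_rel"

definition C_free :: "nat \<Rightarrow> 'a set \<Rightarrow> ('a \<Rightarrow> 'a \<Rightarrow> bool) \<Rightarrow> bool" where
  "C_free n S E \<longleftrightarrow> \<not> has_induced S E n (cycle_rel n)"

definition twoP3_free :: "'a set \<Rightarrow> ('a \<Rightarrow> 'a \<Rightarrow> bool) \<Rightarrow> bool" where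
  "twoP3_free S E \<longleftrightarrow> \<not> has_induced S E 6 twoP3_rel"

definition chordal :: "'a set \<Rightarrow> ('a \<Rightarrow> 'a \<Rightarrow> bool) \<Rightarrow> bool" where
  "chordal S E \<longleftrightarrow> (\<forall>n\<ge>4. C_free n S E)"

definition in_C :: "'a set \<Rightarrow> ('a \<Rightarrow> 'a \<Rightarrow> bool) \<Rightarrow> bool" where
  "in_C S E \<longleftrightarrow> P_free 4 S E \<and> C_free 4 S E \<and> twoP3_free S E"

definition clique_in :: "'a set \<Rightarrow> ('a \<Rightarrow> 'a \<Rightarrow> bool) \<Rightarrow> bool" where
  "clique_in S E \<longleftrightarrow> (\<forall>u\<in>S. \<forall>v\<in>S. u \<noteq> v \<longrightarrow> E u v)"

definition connected_in :: "'a set \<Rightarrow> ('a \<Rightarrow> 'a \<Rightarrow> bool) \<Rightarrow> bool" where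
  "connected_in S E \<longleftrightarrow> S \<noteq> {} \<and>
     (\<forall>u\<in>S. \<forall>v\<in>S. (\<lambda>a b. a \<in> S \<and> b \<in> S \<and> E a b)\<^sup>*\<^sup>* u v)"

definition component :: "'a set \<Rightarrow> ('a \<Rightarrow> 'a \<Rightarrow> bool) \<Rightarrow> 'a set \<Rightarrow> bool" where
  "component S E C \<longleftrightarrow> C \<subseteq> S \<and> connected_in C E \<and> (\<forall>u\<in>C. \<forall>v\<in>S - C. \<not> E u v)"

definition universal :: "'a set \<Rightarrow> ('a \<Rightarrow> 'a \<Rightarrow> bool) \<Rightarrow> 'a set" where
  "universal S E = {u \<in> S. \<forall>v\<in>S. v \<noteq> u \<longrightarrow> E u v}"

text \<open>The nodes of the rooted forest T(G[S]), following the recursive definition.\<close>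
inductive tnode :: "('a \<Rightarrow> 'a \<Rightarrow> bool) \<Rightarrow> 'a set \<Rightarrow> 'a set \<Rightarrow> bool" for E where
  disc: "\<not> connected_in S E \<Longrightarrow> component S E C \<Longrightarrow> tnode E C N \<Longrightarrow> tnode E S N"
| clq: "connected_in S E \<Longrightarrow> clique_in S E \<Longrightarrow> tnode E S S"
| root: "connected_in S E \<Longrightarrow> \<not> clique_in S E \<Longrightarrow> tnode E S (universal S E)"
| sub: "connected_in S E \<Longrightarrow> \<not> clique_in S E \<Longrightarrow> component (S - universal S E) E C
          \<Longrightarrow> tnode E C N \<Longrightarrow> tnode E S N"

text \<open>tdesc E S x y: y is a descendant of x in T(G[S]), i.e. the node containing y
  is a proper descendant of the node containing x.\<close>
inductive tdesc :: "('a \<Rightarrow> 'a \<Rightarrow> bool) \<Rightarrow> 'a set \<Rightarrow> 'a \<Rightarrow> 'a \<Rightarrow> bool" for E where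
  disc: "\<not> connected_in S E \<Longrightarrow> component S E C \<Longrightarrow> tdesc E C x y \<Longrightarrow> tdesc E S x y"
| root: "connected_in S E \<Longrightarrow> \<not> clique_in S E \<Longrightarrow> x \<in> universal S E
          \<Longrightarrow> y \<in> S - universal S E \<Longrightarrow> tdesc E S x y"
| sub: "connected_in S E \<Longrightarrow> \<not> clique_in S E \<Longrightarrow> component (S - universal S E) E C
          \<Longrightarrow> tdesc E C x y \<Longrightarrow> tdesc E S x y"

definition basic_member :: "'a set \<Rightarrow> ('a \<Rightarrow> 'a \<Rightarrow> bool) \<Rightarrow> bool" where
  "basic_member S E \<longleftrightarrow> in_C S E \<and> (\<forall>N. tnode E S N \<longrightarrow> card N = 1)"

definition simplicial_in :: "'a set \<Rightarrow> ('a \<Rightarrow> 'a \<Rightarrow> bool) \<Rightarrow> 'a \<Rightarrow> bool" where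
  "simplicial_in S E v \<longleftrightarrow> clique_in {u \<in> S. E v u} E"

definition nbr_in :: "('a \<Rightarrow> 'a \<Rightarrow> bool) \<Rightarrow> 'a set \<Rightarrow> 'a \<Rightarrow> 'a set" where
  "nbr_in E A v = {a \<in> A. E v a}"

definition C_pair :: "'a set \<Rightarrow> ('a \<Rightarrow> 'a \<Rightarrow> bool) \<Rightarrow> bool" where
  "C_pair V E \<longleftrightarrow> graph V E \<and> P_free 6 V E \<and> chordal V E \<and>
     (\<exists>X A. X \<inter> A = {} \<and> V = X \<union> A \<and> clique_in A E \<and> in_C X E \<and>
        (\<forall>x\<in>X. \<exists>a\<in>A. E x a) \<and>
        (\<forall>x\<in>X. \<forall>x'\<in>X. x \<noteq> x' \<and> \<not> E x x' \<longrightarrow> \<not> (\<exists>a\<in>A. E x a \<and> E x' a)))"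

definition basic_C_pair :: "'b set \<Rightarrow> ('b \<Rightarrow> 'b \<Rightarrow> bool) \<Rightarrow> nat \<Rightarrow> (nat \<Rightarrow> 'b) \<Rightarrow> (nat \<Rightarrow> 'b) \<Rightarrow> bool" where
  "basic_C_pair W F k x a \<longleftrightarrow> graph W F \<and>
     inj_on x {1..k} \<and> inj_on a {0..k} \<and> x ` {1..k} \<inter> a ` {0..k} = {} \<and>
     W = x ` {1..k} \<union> a ` {0..k} \<and> clique_in (a ` {0..k}) F \<and>
     basic_member (x ` {1..k}) F \<and>
     (\<forall>i\<in>{1..k}.
        (simplicial_in (x ` {1..k}) F (x i) \<longrightarrow> nbr_in F (a ` {0..k}) (x i) = {a i}) \<and>
        (\<not> simplicial_in (x ` {1..k}) F (x i) \<longrightarrow>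
           nbr_in F (a ` {0..k}) (x i) =
             {a i} \<union> \<Union> {nbr_in F (a ` {0..k}) y | y. tdesc F (x ` {1..k}) (x i) y}))"

definition acceptable :: "('b \<Rightarrow> 'b \<Rightarrow> bool) \<Rightarrow> nat \<Rightarrow> (nat \<Rightarrow> 'b) \<Rightarrow> (nat \<Rightarrow> 'b) \<Rightarrow> 'b set set \<Rightarrow> bool" where
  "acceptable F k x a M \<longleftrightarrow>
     (\<exists>I \<subseteq> {1..k}. clique_in (x ` I) F \<and> M = {{x i, a i} | i. i \<in> I})"

definition graded_pair :: "('a \<Rightarrow> 'a \<Rightarrow> bool) \<Rightarrow> 'a set \<Rightarrow> 'a set \<Rightarrow> bool" where
  "graded_pair E P R \<longleftrightarrow> P \<inter> R = {} \<and> (\<forall>p\<in>P. \<forall>p'\<in>P.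
      {r \<in> R. E p r} \<subseteq> {r \<in> R. E p' r} \<or> {r \<in> R. E p' r} \<subseteq> {r \<in> R. E p r})"

text \<open>(V,E) is an augmentation of (W,F) along M: q maps each vertex of V to the
  vertex w of W whose clique Q_w contains it (Q_w = fibre of q over w, possibly empty).\<close>
definition augmentation :: "'a set \<Rightarrow> ('a \<Rightarrow> 'a \<Rightarrow> bool) \<Rightarrow> 'b set \<Rightarrow> ('b \<Rightarrow> 'b \<Rightarrow> bool) \<Rightarrow> 'b set set \<Rightarrow> bool" where
  "augmentation V E W F M \<longleftrightarrow> (\<exists>q :: 'a \<Rightarrow> 'b.
     (\<forall>v\<in>V. q v \<in> W) \<and>
     (\<forall>w\<in>W. clique_in {v \<in> V. q v = w} E) \<and>
     (\<forall>u\<in>W. \<forall>w\<in>W. u \<noteq> w \<longrightarrow>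
        (F u w \<and> {u, w} \<notin> M \<longrightarrow> (\<forall>p\<in>V. \<forall>p'\<in>V. q p = u \<longrightarrow> q p' = w \<longrightarrow> E p p')) \<and>
        (\<not> F u w \<longrightarrow> (\<forall>p\<in>V. \<forall>p'\<in>V. q p = u \<longrightarrow> q p' = w \<longrightarrow> \<not> E p p')) \<and>
        ({u, w} \<in> M \<longrightarrow> graded_pair E {v \<in> V. q v = u} {v \<in> V. q v = w})))"

end

theory Submission
  imports Defs
begin


definition nb :: "'a set \<Rightarrow> ('a \<Rightarrow> 'a \<Rightarrow> bool) \<Rightarrow> 'a \<Rightarrow> 'a set" where
  "nb S E v = {u \<in> S. u = v \<or> E v u}"

lemma has_induced_mono: "has_induced T E n R \<Longrightarrow> T \<subseteq> S \<Longrightarrow> has_induced S E n R"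
  unfolding has_induced_def by (meson order_trans)

lemma P_free_mono: "P_free n S E \<Longrightarrow> T \<subseteq> S \<Longrightarrow> P_free n T E"
  unfolding P_free_def using has_induced_mono by blast

lemma C_free_mono: "C_free n S E \<Longrightarrow> T \<subseteq> S \<Longrightarrow> C_free n T E"
  unfolding C_free_def using has_induced_mono by blast

lemma lt4: "(i::nat) < 4 \<longleftrightarrow> i = 0 \<or> i = 1 \<or> i = 2 \<or> i = 3" by arith
lemma all4: "(\<forall>i<(4::nat). P i) \<longleftrightarrow> P 0 \<and> P 1 \<and> P 2 \<and> P 3"
  unfolding lt4 by blast
lemma lt6: "(i::nat) < 6 \<longleftrightarrow> i = 0 \<or> i = 1 \<or> i = 2 \<or> i = 3 \<or> i = 4 \<or> i = 5" by arith
lemma all6: "(\<forall>i<(6::nat). P i) \<longleftrightarrow> P 0 \<and> P 1 \<and> P 2 \<and> P 3 \<and> P 4 \<and> P 5"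
  unfolding lt6 by blast

lemma P4_contra:
  assumes "P_free 4 S E" "a\<in>S" "b\<in>S" "c\<in>S" "d\<in>S"
    and sym: "\<And>u v. E u v \<Longrightarrow> E v u" and irr: "\<And>u. \<not> E u u"
    and "E a b" "E b c" "E c d" "\<not> E a c" "\<not> E b d" "\<not> E a d"
  shows False
proof -
  have d: "a \<noteq> b" "a \<noteq> c" "a \<noteq> d" "b \<noteq> c" "b \<noteq> d" "c \<noteq> d"
  proof -
    show "a \<noteq> b" using \<open>E a b\<close> irr by auto
    show "b \<noteq> c" using \<open>E b c\<close> irr by auto
    show "c \<noteq> d" using \<open>E c d\<close> irr by auto
    show "a \<noteq> c" using \<open>E c d\<close> \<open>\<not> E a d\<close> by auto
    show "b \<noteq> d" using \<open>E a b\<close> \<open>\<not> E a d\<close> by auto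
    show "a \<noteq> d" using \<open>E c d\<close> \<open>\<not> E a c\<close> sym by auto
  qed
  let ?f = "\<lambda>i. [a,b,c,d] ! i"
  have "has_induced S E 4 path_rel"
    unfolding has_induced_def
  proof (intro exI[of _ ?f] conjI)
    show "inj_on ?f {..<4}"
      by (rule inj_on_nth) (use d in auto)
    show "?f ` {..<4} \<subseteq> S" using assms(2-5) by (auto simp: lt4)
    show "\<forall>i<4. \<forall>j<4. i \<noteq> j \<longrightarrow> E (?f i) (?f j) = path_rel i j"
      unfolding all4 using assms sym by (auto simp: path_rel_def)
  qed
  then show False using assms(1) unfolding P_free_def by blast
qed

lemma C4_contra:
  assumes "C_free 4 S E" "a\<in>S" "b\<in>S" "c\<in>S" "d\<in>S"
    and sym: "\<And>u v. E u v \<Longrightarrow> E v u" and irr: "\<And>u. \<not> E u u"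
    and "E a b" "E b c" "E c d" "E d a" "\<not> E a c" "\<not> E b d" "a \<noteq> c" "b \<noteq> d"
  shows False
proof -
  have d: "a \<noteq> b" "a \<noteq> c" "a \<noteq> d" "b \<noteq> c" "b \<noteq> d" "c \<noteq> d"
  proof -
    show "a \<noteq> b" using \<open>E a b\<close> irr by auto
    show "b \<noteq> c" using \<open>E b c\<close> irr by auto
    show "c \<noteq> d" using \<open>E c d\<close> irr by auto
    show "a \<noteq> d" using \<open>E d a\<close> irr by auto
    show "a \<noteq> c" by fact
    show "b \<noteq> d" by fact
  qed
  let ?f = "\<lambda>i. [a,b,c,d] ! i"
  have "has_induced S E 4 (cycle_rel 4)"
    unfolding has_induced_def
  proof (intro exI[of _ ?f] conjI)
    show "inj_on ?f {..<4}"
      by (rule inj_on_nth) (use d in auto)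
    show "?f ` {..<4} \<subseteq> S" using assms(2-5) by (auto simp: lt4)
    show "\<forall>i<4. \<forall>j<4. i \<noteq> j \<longrightarrow> E (?f i) (?f j) = cycle_rel 4 i j"
      unfolding all4 using assms sym by (auto simp: cycle_rel_def)
  qed
  then show False using assms(1) unfolding C_free_def by blast
qed

lemma P6_contra:
  assumes "P_free 6 S E" "a\<in>S" "b\<in>S" "c\<in>S" "d\<in>S" "e\<in>S" "f\<in>S"
    and sym: "\<And>u v. E u v \<Longrightarrow> E v u"
    and "distinct [a,b,c,d,e,f]"
    and "E a b" "E b c" "E c d" "E d e" "E e f"
    and "\<not> E a c" "\<not> E a d" "\<not> E a e" "\<not> E a f"
    and "\<not> E b d" "\<not> E b e" "\<not> E b f"
    and "\<not> E c e" "\<not> E c f" "\<not> E d f"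
  shows False
proof -
  let ?f = "\<lambda>i. [a,b,c,d,e,f] ! i"
  have "has_induced S E 6 path_rel"
    unfolding has_induced_def
  proof (intro exI[of _ ?f] conjI)
    show "inj_on ?f {..<6}"
      by (rule inj_on_nth) (use assms(9) in auto)
    show "?f ` {..<6} \<subseteq> S" using assms(2-7) by (auto simp: lt6)
    have s: "E b a" "E c b" "E d c" "E e d" "E f e"
            "\<not> E c a" "\<not> E d a" "\<not> E e a" "\<not> E f a"
            "\<not> E d b" "\<not> E e b" "\<not> E f b" "\<not> E e c" "\<not> E f c" "\<not> E f d"
      using assms(10-) sym by blast+
    show "\<forall>i<6. \<forall>j<6. i \<noteq> j \<longrightarrow> E (?f i) (?f j) = path_rel i j"
      unfolding all6 using assms(10-) s by (simp add: path_rel_def)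
  qed
  then show False using assms(1) unfolding P_free_def by blast
qed



definition rS :: "'a set \<Rightarrow> ('a \<Rightarrow> 'a \<Rightarrow> bool) \<Rightarrow> 'a \<Rightarrow> 'a \<Rightarrow> bool" where
  "rS S E = (\<lambda>a b. a \<in> S \<and> b \<in> S \<and> E a b)"

definition comp :: "'a set \<Rightarrow> ('a \<Rightarrow> 'a \<Rightarrow> bool) \<Rightarrow> 'a \<Rightarrow> 'a set" where
  "comp S E v = {u. (rS S E)\<^sup>*\<^sup>* v u}"

lemma connected_in_rS: "connected_in S E \<longleftrightarrow> S \<noteq> {} \<and> (\<forall>u\<in>S. \<forall>v\<in>S. (rS S E)\<^sup>*\<^sup>* u v)"
  unfolding connected_in_def rS_def by simp

lemma rtr_in: "(rS S E)\<^sup>*\<^sup>* v u \<Longrightarrow> v \<in> S \<Longrightarrow> u \<in> S"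
  by (induction rule: rtranclp_induct) (auto simp: rS_def)

lemma rtr_sym:
  assumes sym: "\<And>u v. E u v \<Longrightarrow> E v u"
  shows "(rS S E)\<^sup>*\<^sup>* v u \<Longrightarrow> (rS S E)\<^sup>*\<^sup>* u v"
proof (induction rule: rtranclp_induct)
  case base then show ?case by simp
next
  case (step b c)
  have "rS S E c b" using step(2) sym by (auto simp: rS_def)
  then show ?case using step(3) by (rule converse_rtranclp_into_rtranclp)
qed

lemma rtr_restrict:
  "(rS S E)\<^sup>*\<^sup>* v u \<Longrightarrow> (rS (comp S E v) E)\<^sup>*\<^sup>* v u"
proof (induction rule: rtranclp_induct)
  case base then show ?case by simp
next
  case (step b c)
  have "b \<in> comp S E v" using step(1) by (simp add: comp_def)
  moreover have "c \<in> comp S E v" using step(1,2) by (simp add: comp_def)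
  ultimately have "rS (comp S E v) E b c" using step(2) by (auto simp: rS_def)
  then show ?case using step(3) by simp
qed

lemma comp_sub: "v \<in> S \<Longrightarrow> comp S E v \<subseteq> S"
  unfolding comp_def using rtr_in by fast

lemma comp_self: "v \<in> comp S E v"
  unfolding comp_def by simp

lemma comp_mem: "v \<in> S \<Longrightarrow> u \<in> S \<Longrightarrow> E v u \<Longrightarrow> u \<in> comp S E v"
  unfolding comp_def rS_def by (simp add: r_into_rtranclp)

lemma comp_component:
  assumes "v \<in> S" and sym: "\<And>u v. E u v \<Longrightarrow> E v u"
  shows "component S E (comp S E v)"
proof -
  let ?C = "comp S E v"
  have sub: "?C \<subseteq> S" using comp_sub assms(1) .
  have "\<forall>u\<in>?C. \<forall>w\<in>?C. (rS ?C E)\<^sup>*\<^sup>* u w"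
  proof (intro ballI)
    fix u w assume "u \<in> ?C" "w \<in> ?C"
    then have "(rS S E)\<^sup>*\<^sup>* v u" "(rS S E)\<^sup>*\<^sup>* v w" by (auto simp: comp_def)
    then have "(rS ?C E)\<^sup>*\<^sup>* v u" "(rS ?C E)\<^sup>*\<^sup>* v w"
      by (auto intro: rtr_restrict)
    then have "(rS ?C E)\<^sup>*\<^sup>* u v" using rtr_sym[where E=E, OF sym] by blast
    then show "(rS ?C E)\<^sup>*\<^sup>* u w" using \<open>(rS ?C E)\<^sup>*\<^sup>* v w\<close> by simp
  qed
  then have "connected_in ?C E" unfolding connected_in_rS using comp_self by fast
  moreover have "\<forall>u\<in>?C. \<forall>w\<in>S - ?C. \<not> E u w"
  proof (intro ballI notI)
    fix u w assume "u \<in> ?C" "w \<in> S - ?C" "E u w"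
    then have "rS S E u w" using sub by (auto simp: rS_def)
    then have "w \<in> ?C" using \<open>u \<in> ?C\<close> by (auto simp: comp_def)
    then show False using \<open>w \<in> S - ?C\<close> by simp
  qed
  ultimately show ?thesis unfolding component_def using sub by simp
qed

lemma comp_proper:
  assumes "\<not> connected_in S E" "v \<in> S" and sym: "\<And>u v. E u v \<Longrightarrow> E v u"
  shows "comp S E v \<subset> S"
proof -
  have "component S E (comp S E v)" using comp_component assms by metis
  then show ?thesis using assms(1) comp_sub[OF assms(2)] unfolding component_def by auto
qed

lemma nb_sub_S: "nb S E v \<subseteq> S" unfolding nb_def by auto

lemma nb_component: "component S E C \<Longrightarrow> v \<in> C \<Longrightarrow> nb S E v = nb C E v"
  unfolding component_def nb_def by blast

lemma nb_sub:
  assumes "component (S - universal S E) E C" "v \<in> C" and sym: "\<And>u v. E u v \<Longrightarrow> E v u"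
  shows "nb S E v = nb C E v \<union> universal S E"
proof -
  have C: "C \<subseteq> S - universal S E" "\<forall>u\<in>C. \<forall>w\<in>(S - universal S E) - C. \<not> E u w"
    using assms(1) unfolding component_def by auto
  show ?thesis
  proof
    show "nb S E v \<subseteq> nb C E v \<union> universal S E"
      using C assms(2) unfolding nb_def by blast
    show "nb C E v \<union> universal S E \<subseteq> nb S E v"
    proof
      fix u assume u: "u \<in> nb C E v \<union> universal S E"
      have vS: "v \<in> S" "v \<notin> universal S E" using C assms(2) by auto
      show "u \<in> nb S E v"
      proof (cases "u \<in> universal S E")
        case True
        then have "v \<noteq> u" using vS by auto
        then have "u \<in> S" "E u v" using vS True unfolding universal_def by auto
        then show ?thesis using sym unfolding nb_def by auto
      next
        case False
        then show ?thesis using u C unfolding nb_def by auto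
      qed
    qed
  qed
qed

lemma universal_iff: "x \<in> S \<Longrightarrow> x \<in> universal S E \<longleftrightarrow> nb S E x = S"
  unfolding universal_def nb_def by auto

lemma clique_nb: "clique_in S E \<Longrightarrow> x \<in> S \<Longrightarrow> nb S E x = S"
  unfolding clique_in_def nb_def by auto

lemma exists_max:
  fixes f :: "'a \<Rightarrow> nat"
  assumes "finite S" "S \<noteq> {}"
  shows "\<exists>v\<in>S. \<forall>u\<in>S. f u \<le> f v"
proof -
  have "Max (f ` S) \<in> f ` S" using assms by simp
  then obtain v where "v \<in> S" "f v = Max (f ` S)" by auto
  then show ?thesis using assms by (metis Max_ge finite_imageI imageI)
qed

lemma universal_ne:
  assumes fin: "finite S" and conn: "connected_in S E"
    and sym: "\<And>u v. E u v \<Longrightarrow> E v u" and irr: "\<And>u. \<not> E u u"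
    and p4: "P_free 4 S E" and c4: "C_free 4 S E"
  shows "universal S E \<noteq> {}"
proof -
  have ne: "S \<noteq> {}" using conn unfolding connected_in_def by simp
  obtain v where v: "v \<in> S" and mx: "\<forall>u\<in>S. card (nb S E u) \<le> card (nb S E v)"
    using exists_max[OF fin ne, of "\<lambda>u. card (nb S E u)"] by blast
  have "v \<in> universal S E"
    unfolding universal_def
  proof (clarsimp simp: v)
    fix w assume w: "w \<in> S" "w \<noteq> v"
    show "E v w"
    proof (rule ccontr)
      assume nvw: "\<not> E v w"
      then have wn: "w \<notin> nb S E v" using w unfolding nb_def by auto
      have path: "(rS S E)\<^sup>*\<^sup>* v w" using conn v w unfolding connected_in_rS by blast
      have claim: "u \<in> nb S E v \<or> (\<exists>y\<in>nb S E v. \<exists>z\<in>S. z \<notin> nb S E v \<and> E y z)"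
        if "(rS S E)\<^sup>*\<^sup>* v u" for u
        using that
      proof (induction rule: rtranclp_induct)
        case base then show ?case using v by (simp add: nb_def)
      next
        case (step b c)
        then show ?case unfolding rS_def by blast
      qed
      from claim[OF path] wn obtain y z where y: "y \<in> nb S E v" and z: "z \<in> S" "z \<notin> nb S E v" "E y z"
        by blast
      have yv: "y \<noteq> v" using y z unfolding nb_def by auto
      have Evy: "E v y" "y \<in> S" using y yv unfolding nb_def by auto
      have "\<not> nb S E v \<subseteq> nb S E y"
      proof
        assume H: "nb S E v \<subseteq> nb S E y"
        have zy: "z \<in> nb S E y" using z unfolding nb_def by auto
        have "nb S E v \<subseteq> nb S E y - {z}" using H z by auto
        then have "card (nb S E v) \<le> card (nb S E y - {z})"
          by (intro card_mono) (auto simp: nb_def fin)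
        also have "\<dots> < card (nb S E y)"
          using zy fin by (intro card_Diff1_less) (auto simp: nb_def)
        finally show False using mx Evy by fastforce
      qed
      then obtain t where t: "t \<in> nb S E v" "t \<notin> nb S E y" by blast
      have tv: "t \<noteq> v" using t Evy sym unfolding nb_def by auto
      have t2: "E v t" "t \<in> S" "t \<noteq> y" "\<not> E y t" using t tv unfolding nb_def by auto
      have tz: "t \<noteq> z" using t z by auto
      have vz: "\<not> E v z" "v \<noteq> z" using z unfolding nb_def by auto
      have Etv: "E t v" using t2(1) sym by blast
      have nty: "\<not> E t y" using t2(4) sym by blast
      show False
      proof (cases "E t z")
        case True
        have "E z t" using True sym by blast
        show False
          by (rule C4_contra[OF c4 t2(2) v Evy(2) z(1) sym irr Etv Evy(1) z(3) \<open>E z t\<close> nty vz(1) t2(3) vz(2)])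
      next
        case False
        show False
          by (rule P4_contra[OF p4 t2(2) v Evy(2) z(1) sym irr Etv Evy(1) z(3) nty vz(1) False])
      qed
    qed
  qed
  then show ?thesis by auto
qed

lemma tdesc_imp:
  assumes "tdesc E S x y" and sym: "\<And>u v. E u v \<Longrightarrow> E v u"
  shows "x \<in> S \<and> y \<in> S \<and> y \<in> nb S E x \<and> nb S E y \<subset> nb S E x"
  using assms(1)
proof (induction rule: tdesc.induct)
  case (disc S C x y)
  then have "C \<subseteq> S" unfolding component_def by simp
  moreover have "nb S E x = nb C E x" "nb S E y = nb C E y"
    using nb_component[OF disc(2)] disc(4) by auto
  ultimately show ?case using disc(4) by (simp add: subsetD)
next
  case (root S x y)
  have xy: "x \<in> S" "y \<in> S" using root(3,4) unfolding universal_def by auto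
  have "nb S E x = S" using root(3) universal_iff[OF xy(1)] by simp
  moreover have "nb S E y \<noteq> S" using root(4) universal_iff[OF xy(2)] by simp
  ultimately show ?case using nb_sub_S[of S E y] xy by auto
next
  case (sub S C x y)
  have C: "C \<subseteq> S - universal S E" using sub(3) unfolding component_def by simp
  have ex: "nb S E x = nb C E x \<union> universal S E" using nb_sub[OF sub(3) _ sym] sub(5) by simp
  have ey: "nb S E y = nb C E y \<union> universal S E" using nb_sub[OF sub(3) _ sym] sub(5) by simp
  obtain w where w: "w \<in> nb C E x" "w \<notin> nb C E y" using sub(5) by blast
  have "w \<notin> universal S E" using w(1) C nb_sub_S[of C E x] by blast
  have "nb C E y \<subseteq> nb C E x" using sub(5) by blast
  then have "nb S E y \<subseteq> nb S E x" using ex ey by blast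
  moreover have "w \<in> nb S E x" "w \<notin> nb S E y" using ex ey w \<open>w \<notin> universal S E\<close> by auto
  ultimately have "nb S E y \<subset> nb S E x" by blast
  moreover have "y \<in> nb S E x" using ex sub(5) by blast
  moreover have "x \<in> S" "y \<in> S" using sub(5) C by auto
  ultimately show ?case by blast
qed

lemma tdesc_rev:
  assumes "finite S" and sym: "\<And>u v. E u v \<Longrightarrow> E v u" and irr: "\<And>u. \<not> E u u"
    and "P_free 4 S E" "C_free 4 S E"
    and "x \<in> S" "y \<in> S" "y \<in> nb S E x" "nb S E y \<subset> nb S E x"
  shows "tdesc E S x y"
  using assms(1,4-)
proof (induction "card S" arbitrary: S rule: less_induct)
  case less
  have xy: "x \<noteq> y" using less.prems by auto
  then have Exy: "E x y" using less.prems unfolding nb_def by auto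
  show ?case
  proof (cases "connected_in S E")
    case False
    let ?C = "comp S E x"
    have comp: "component S E ?C" using comp_component[OF less.prems(4) sym] .
    have Csub: "?C \<subset> S" using comp_proper[OF False less.prems(4) sym] .
    have yC: "y \<in> ?C" using comp_mem[of x S y E, OF less.prems(4,5) Exy] .
    have xC: "x \<in> ?C" by (rule comp_self)
    have Csub': "?C \<subseteq> S" using Csub by (rule psubset_imp_subset)
    have "tdesc E ?C x y"
    proof (rule less.hyps)
      show "card ?C < card S" using Csub less.prems(1) by (simp add: psubset_card_mono)
      show "finite ?C" using finite_subset[OF Csub' less.prems(1)] .
      show "P_free 4 ?C E" using P_free_mono[OF less.prems(2) Csub'] .
      show "C_free 4 ?C E" using C_free_mono[OF less.prems(3) Csub'] .
      show "x \<in> ?C" "y \<in> ?C" by (fact xC, fact yC)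
      have "nb S E x = nb ?C E x" "nb S E y = nb ?C E y"
        using nb_component[OF comp xC] nb_component[OF comp yC] by auto
      then show "y \<in> nb ?C E x" "nb ?C E y \<subset> nb ?C E x"
        using less.prems(6,7) by simp_all
    qed
    then show ?thesis using tdesc.disc[OF False comp] by blast
  next
    case True
    show ?thesis
    proof (cases "clique_in S E")
      case True
      then have "nb S E x = S" "nb S E y = S" using clique_nb[OF True less.prems(4)] clique_nb[OF True less.prems(5)] by auto
      then show ?thesis using less.prems(7) by simp
    next
      case ncl: False
      let ?U = "universal S E"
      have Une: "?U \<noteq> {}" using universal_ne[OF less.prems(1) True sym irr less.prems(2,3)] .
      have yU: "y \<notin> ?U"
      proof
        assume "y \<in> ?U"
        then have "nb S E y = S" using universal_iff[OF less.prems(5)] by simp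
        then show False using less.prems(7) nb_sub_S[of S E x] by auto
      qed
      show ?thesis
      proof (cases "x \<in> ?U")
        case True
        then show ?thesis using tdesc.root[OF \<open>connected_in S E\<close> ncl True] yU less.prems by blast
      next
        case xU: False
        let ?C = "comp (S - ?U) E x"
        have xSU: "x \<in> S - ?U" "y \<in> S - ?U" using xU yU less.prems(4,5) by auto
        have comp: "component (S - ?U) E ?C" using comp_component[OF xSU(1) sym] .
        have xC: "x \<in> ?C" by (rule comp_self)
        have yC: "y \<in> ?C" using comp_mem[of x "S - ?U" y E, OF xSU Exy] .
        have Csub: "?C \<subseteq> S - ?U" using comp unfolding component_def by simp
        have Csub': "?C \<subseteq> S" using Csub by blast
        have "card ?C < card S"
        proof -
          obtain u where "u \<in> ?U" using Une by blast
          then have "u \<in> S" "u \<notin> ?C" using Csub unfolding universal_def by auto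
          then have "?C \<subset> S" using Csub' by blast
          then show ?thesis using less.prems(1) by (simp add: psubset_card_mono)
        qed
        have ex: "nb S E x = nb ?C E x \<union> ?U" using nb_sub[OF comp xC sym] .
        have ey: "nb S E y = nb ?C E y \<union> ?U" using nb_sub[OF comp yC sym] .
        have dx: "nb ?C E x \<inter> ?U = {}" "nb ?C E y \<inter> ?U = {}"
          using Csub nb_sub_S[of ?C E] by blast+
        have "tdesc E ?C x y"
        proof (rule less.hyps)
          show "card ?C < card S" by fact
          show "finite ?C" using finite_subset[OF Csub' less.prems(1)] .
          show "P_free 4 ?C E" using P_free_mono[OF less.prems(2) Csub'] .
          show "C_free 4 ?C E" using C_free_mono[OF less.prems(3) Csub'] .
          show "x \<in> ?C" "y \<in> ?C" by (fact xC, fact yC)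
          show "y \<in> nb ?C E x" using yC Exy unfolding nb_def by simp
          have "nb ?C E y \<subseteq> nb ?C E x" using less.prems(7) ex ey dx by blast
          moreover have "nb ?C E y \<noteq> nb ?C E x" using less.prems(7) ex ey by auto
          ultimately show "nb ?C E y \<subset> nb ?C E x" by blast
        qed
        then show ?thesis using tdesc.sub[OF \<open>connected_in S E\<close> ncl comp] by blast
      qed
    qed
  qed
qed

lemma tnode_prop:
  assumes "tnode E S N" and sym: "\<And>u v. E u v \<Longrightarrow> E v u" and irr: "\<And>u. \<not> E u u"
  shows "finite S \<Longrightarrow> P_free 4 S E \<Longrightarrow> C_free 4 S E \<Longrightarrow>
     N \<noteq> {} \<and> N \<subseteq> S \<and> (\<forall>u\<in>N. \<forall>v\<in>N. nb S E u = nb S E v)"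
  using assms(1)
proof (induction rule: tnode.induct)
  case (disc S C N)
  have C: "C \<subseteq> S" using disc(2) unfolding component_def by simp
  have "N \<noteq> {} \<and> N \<subseteq> C \<and> (\<forall>u\<in>N. \<forall>v\<in>N. nb C E u = nb C E v)"
    using disc(4) finite_subset[OF C disc(5)] P_free_mono[OF disc(6) C] C_free_mono[OF disc(7) C] by blast
  then have H: "N \<noteq> {}" "N \<subseteq> C" "\<forall>u\<in>N. \<forall>v\<in>N. nb C E u = nb C E v" by blast+
  have eq: "\<And>u. u \<in> N \<Longrightarrow> nb S E u = nb C E u" using nb_component[OF disc(2)] H(2) by blast
  show ?case
  proof (intro conjI ballI)
    show "N \<noteq> {}" by fact
    show "N \<subseteq> S" using H(2) C by (rule subset_trans)
    fix u v assume "u \<in> N" "v \<in> N"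
    moreover then have "nb C E u = nb C E v" using H(3) by blast
    ultimately show "nb S E u = nb S E v" using eq by simp
  qed
next
  case (clq S)
  have "S \<noteq> {}" using clq(1) unfolding connected_in_def by simp
  moreover have "\<forall>u\<in>S. nb S E u = S" using clique_nb[OF clq(2)] by blast
  ultimately show ?case by simp
next
  case (root S)
  have "universal S E \<noteq> {}" using universal_ne[OF root(3) root(1) sym irr root(4) root(5)] .
  moreover have "universal S E \<subseteq> S" unfolding universal_def by auto
  moreover have eq: "\<And>u. u \<in> universal S E \<Longrightarrow> nb S E u = S"
  proof -
    fix u assume u: "u \<in> universal S E"
    then have "u \<in> S" unfolding universal_def by simp
    then show "nb S E u = S" using universal_iff[of u S E] u by simp
  qed
  ultimately show ?case by (intro conjI ballI) (simp_all add: eq)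
next
  case (sub S C N)
  have C: "C \<subseteq> S - universal S E" using sub(3) unfolding component_def by simp
  have C': "C \<subseteq> S" using C by blast
  have "N \<noteq> {} \<and> N \<subseteq> C \<and> (\<forall>u\<in>N. \<forall>v\<in>N. nb C E u = nb C E v)"
    using sub(5) finite_subset[OF C' sub(6)] P_free_mono[OF sub(7) C'] C_free_mono[OF sub(8) C'] by blast
  then have H: "N \<noteq> {}" "N \<subseteq> C" "\<forall>u\<in>N. \<forall>v\<in>N. nb C E u = nb C E v" by blast+
  have eq: "\<And>u. u \<in> N \<Longrightarrow> nb S E u = nb C E u \<union> universal S E" using nb_sub[OF sub(3) _ sym] H(2) by blast
  show ?case
  proof (intro conjI ballI)
    show "N \<noteq> {}" by fact
    show "N \<subseteq> S" using H(2) C' by (rule subset_trans)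
    fix u v assume "u \<in> N" "v \<in> N"
    moreover then have "nb C E u = nb C E v" using H(3) by blast
    ultimately show "nb S E u = nb S E v" using eq by simp
  qed
qed



lemma exists_min:
  fixes f :: "'a \<Rightarrow> nat"
  assumes "finite S" "S \<noteq> {}"
  shows "\<exists>v\<in>S. \<forall>u\<in>S. f v \<le> f u"
proof -
  have "Min (f ` S) \<in> f ` S" using assms by simp
  then obtain v where "v \<in> S" "f v = Min (f ` S)" by auto
  then show ?thesis using assms by (metis Min_le finite_imageI imageI)
qed

locale cp =
  fixes V :: "'a set" and E :: "'a \<Rightarrow> 'a \<Rightarrow> bool" and X A :: "'a set"
  assumes gr: "graph V E" and p6: "P_free 6 V E" and ch: "chordal V E"
    and XA: "X \<inter> A = {}" and VXA: "V = X \<union> A" and Acl: "clique_in A E" and XC: "in_C X E"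
    and hasA: "\<forall>x\<in>X. \<exists>a\<in>A. E x a"
    and nocommon: "\<forall>x\<in>X. \<forall>x'\<in>X. x \<noteq> x' \<and> \<not> E x x' \<longrightarrow> \<not> (\<exists>a\<in>A. E x a \<and> E x' a)"
begin

lemma sym: "E u v \<Longrightarrow> E v u" using gr unfolding graph_def by blast
lemma irr: "\<not> E u u" using gr unfolding graph_def by blast
lemma finV: "finite V" using gr unfolding graph_def by blast
lemma finX: "finite X" using finV VXA by simp
lemma finA: "finite A" using finV VXA by simp
lemma XP4: "P_free 4 X E" using XC unfolding in_C_def by blast
lemma XC4: "C_free 4 X E" using XC unfolding in_C_def by blast
lemma VC4: "C_free 4 V E" using ch unfolding chordal_def by simp
lemma XnA: "x \<in> X \<Longrightarrow> x \<notin> A" using XA by blast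
lemma AnX: "x \<in> A \<Longrightarrow> x \<notin> X" using XA by blast
lemma Aadj: "a \<in> A \<Longrightarrow> b \<in> A \<Longrightarrow> a \<noteq> b \<Longrightarrow> E a b" using Acl unfolding clique_in_def by blast

abbreviation NX :: "'a \<Rightarrow> 'a set" where "NX v \<equiv> nb X E v"

definition NA :: "'a \<Rightarrow> 'a set" where "NA v = {a \<in> A. E v a}"

lemma NA_ne: "x \<in> X \<Longrightarrow> NA x \<noteq> {}" using hasA unfolding NA_def by blast

lemma F1:
  assumes "x \<in> X" "y \<in> X" "E x y"
  shows "NA x \<subseteq> NA y \<or> NA y \<subseteq> NA x"
proof (rule ccontr)
  assume "\<not> ?thesis"
  then obtain a b where a: "a \<in> A" "E x a" "\<not> E y a" and b: "b \<in> A" "E y b" "\<not> E x b"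
    unfolding NA_def by blast
  have ab: "a \<noteq> b" using a b by blast
  have V: "x \<in> V" "a \<in> V" "b \<in> V" "y \<in> V" using assms a b VXA by auto
  have "E a b" using Aadj a b ab by blast
  moreover have "E b y" using b sym by blast
  moreover have "E y x" using assms sym by blast
  moreover have "\<not> E a y" using a sym by blast
  moreover have "x \<noteq> b" using assms(1) b XnA by blast
  moreover have "a \<noteq> y" using assms(2) a XnA by blast
  ultimately show False using C4_contra[OF VC4 V sym irr a(2)] b(3) by blast
qed

lemma F2:
  assumes "x \<in> X" "y \<in> X" "x \<noteq> y" "\<not> E x y"
  shows "NA x \<inter> NA y = {}"
  using nocommon assms unfolding NA_def by blast

lemma adj_if_common: "x \<in> X \<Longrightarrow> y \<in> X \<Longrightarrow> x \<noteq> y \<Longrightarrow> a \<in> A \<Longrightarrow> E x a \<Longrightarrow> E y a \<Longrightarrow> E x y"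
  using nocommon by blast

lemma nb_symX: "u \<in> X \<Longrightarrow> w \<in> X \<Longrightarrow> w \<in> NX u \<longleftrightarrow> u \<in> NX w"
  unfolding nb_def using sym by blast

lemma NX_self: "u \<in> X \<Longrightarrow> u \<in> NX u" unfolding nb_def by simp

lemma NX_sub: "NX u \<subseteq> X" unfolding nb_def by auto

lemma closure: "u \<in> X \<Longrightarrow> w \<in> X \<Longrightarrow> w' \<in> X \<Longrightarrow> w \<in> NX u \<Longrightarrow> NX w = NX w' \<Longrightarrow> w' \<in> NX u"
  using nb_symX by metis

lemma twin_adj: "u \<in> X \<Longrightarrow> v \<in> X \<Longrightarrow> u \<noteq> v \<Longrightarrow> NX u = NX v \<Longrightarrow> E u v"
proof -
  assume a: "u \<in> X" "v \<in> X" "u \<noteq> v" "NX u = NX v"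
  then have "u \<in> NX v" using NX_self by blast
  then show "E u v" using a sym unfolding nb_def by auto
qed

lemma F3:
  assumes x: "x \<in> X" and y: "y \<in> X" and yx: "y \<in> NX x" and st: "NX y \<subset> NX x"
  shows "NA y \<subseteq> NA x"
proof -
  obtain z where z: "z \<in> NX x" "z \<notin> NX y" using st by blast
  have "y \<noteq> x" using st by blast
  then have Exy: "E x y" using yx unfolding nb_def by simp
  have zX: "z \<in> X" using z unfolding nb_def by simp
  have "x \<in> NX y" using nb_symX x y yx by blast
  then have zx: "z \<noteq> x" using z by blast
  then have Exz: "E x z" using z unfolding nb_def by simp
  have zy: "z \<noteq> y" "\<not> E y z" using z zX unfolding nb_def by auto
  have dyz: "NA y \<inter> NA z = {}" using F2[OF y zX zy(1)[symmetric] zy(2)] .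
  have nx: "NA x \<noteq> {}" "NA z \<noteq> {}" using NA_ne x zX by auto
  show ?thesis
  proof (rule ccontr)
    assume ns: "\<not> NA y \<subseteq> NA x"
    then have "NA x \<subseteq> NA y" using F1[OF x y Exy] by blast
    moreover have "NA x \<subseteq> NA z \<or> NA z \<subseteq> NA x" using F1[OF x zX Exz] .
    ultimately show False using dyz nx by blast
  qed
qed

lemma TP:
  assumes x: "x \<in> X" and y: "y \<in> X" and Exy: "E x y"
  shows "NX x \<subseteq> NX y \<or> NX y \<subseteq> NX x"
proof (rule ccontr)
  assume "\<not> ?thesis"
  then obtain x' y' where x': "x' \<in> NX x" "x' \<notin> NX y" and y': "y' \<in> NX y" "y' \<notin> NX x" by blast
  have xny: "x \<in> NX y" "y \<in> NX x" using Exy x y sym unfolding nb_def by auto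
  have x'X: "x' \<in> X" "y' \<in> X" using x' y' unfolding nb_def by auto
  have "x' \<noteq> x" using x' xny by blast
  then have Exx': "E x x'" using x' unfolding nb_def by simp
  have "y' \<noteq> y" using y' xny by blast
  then have Eyy': "E y y'" using y' unfolding nb_def by simp
  have nyx': "\<not> E y x'" "x' \<noteq> y" using x' x'X unfolding nb_def by auto
  have nxy': "\<not> E x y'" "y' \<noteq> x" using y' x'X unfolding nb_def by auto
  have E1: "E x' x" using Exx' sym by blast
  have N1: "\<not> E x' y" using nyx' sym by blast
  show False
  proof (cases "E x' y'")
    case True
    have "E y' x'" using True sym by blast
    show False
      by (rule C4_contra[OF XC4 x'X(1) x y x'X(2) sym irr E1 Exy Eyy' \<open>E y' x'\<close> N1 nxy'(1) nyx'(2) nxy'(2)[symmetric]])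
  next
    case False
    show False
      by (rule P4_contra[OF XP4 x'X(1) x y x'X(2) sym irr E1 Exy Eyy' N1 nxy'(1) False])
  qed
qed

definition prec :: "'a \<Rightarrow> 'a \<Rightarrow> bool" where
  "prec y x \<longleftrightarrow> y \<in> NX x \<and> NX y \<subset> NX x"

lemma prec_cong:
  assumes "x \<in> X" "x' \<in> X" "y \<in> X" "y' \<in> X" "NX x = NX x'" "NX y = NX y'"
  shows "prec y x \<longleftrightarrow> prec y' x'"
proof -
  have "y \<in> NX x \<longleftrightarrow> y' \<in> NX x'"
    using closure[of x y y'] closure[of x y' y] assms by metis
  then show ?thesis unfolding prec_def using assms(5,6) by simp
qed

lemma prec_trans: "prec z y \<Longrightarrow> prec y x \<Longrightarrow> prec z x"
  unfolding prec_def by blast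

lemma cross_edge:
  assumes "u \<in> X" "u' \<in> X" "v \<in> X" "v' \<in> X" "NX u = NX u'" "NX v = NX v'" "NX u \<noteq> NX v"
  shows "E u v \<longleftrightarrow> E u' v'"
proof -
  have "u \<noteq> v" "u' \<noteq> v'" using assms by auto
  then have "E u v \<longleftrightarrow> v \<in> NX u" "E u' v' \<longleftrightarrow> v' \<in> NX u'" using assms unfolding nb_def by auto
  moreover have "v \<in> NX u \<longleftrightarrow> v' \<in> NX u'"
    using closure[of u v v'] closure[of u v' v] assms by metis
  ultimately show ?thesis by simp
qed

end


context cp begin

definition rep :: "'a \<Rightarrow> 'a" where "rep u = (SOME w. w \<in> X \<and> NX w = NX u)"

lemma rep_prop: "u \<in> X \<Longrightarrow> rep u \<in> X \<and> NX (rep u) = NX u"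
  unfolding rep_def by (rule someI[of _ u]) simp

lemma rep_eq: "NX u = NX v \<Longrightarrow> rep u = rep v"
  unfolding rep_def by simp

definition RR :: "'a set" where "RR = rep ` X"

lemma finRR: "finite RR" unfolding RR_def using finX by simp

lemma RR_sub: "RR \<subseteq> X" unfolding RR_def using rep_prop by auto

lemma rep_RR: "w \<in> RR \<Longrightarrow> rep w = w"
proof -
  assume "w \<in> RR"
  then obtain u where u: "u \<in> X" "w = rep u" unfolding RR_def by blast
  then have "NX w = NX u" using rep_prop by blast
  then have "rep w = rep u" by (rule rep_eq)
  then show "rep w = w" using u(2) by simp
qed

lemma rep_in_RR: "u \<in> X \<Longrightarrow> rep u \<in> RR" unfolding RR_def by simp

definition kk :: nat where "kk = card RR"

definition rr :: "nat \<Rightarrow> 'a" where "rr = (SOME h. bij_betw h {1..kk} RR)"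

lemma rr_bij: "bij_betw rr {1..kk} RR"
proof -
  have "\<exists>h. bij_betw h {1..kk} RR" unfolding kk_def using ex_bij_betw_nat_finite_1[OF finRR] .
  then show ?thesis unfolding rr_def by (rule someI_ex)
qed

lemma rr_inj: "i \<in> {1..kk} \<Longrightarrow> j \<in> {1..kk} \<Longrightarrow> rr i = rr j \<Longrightarrow> i = j"
  using rr_bij unfolding bij_betw_def inj_on_def by blast

lemma rr_RR: "i \<in> {1..kk} \<Longrightarrow> rr i \<in> RR"
  using rr_bij unfolding bij_betw_def by blast

lemma rr_X: "i \<in> {1..kk} \<Longrightarrow> rr i \<in> X"
  using rr_RR RR_sub by blast

definition idx :: "'a \<Rightarrow> nat" where "idx = inv_into {1..kk} rr"

lemma idx_prop: "w \<in> RR \<Longrightarrow> idx w \<in> {1..kk} \<and> rr (idx w) = w"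
proof -
  assume w: "w \<in> RR"
  have "RR = rr ` {1..kk}" using rr_bij unfolding bij_betw_def by simp
  then have "w \<in> rr ` {1..kk}" using w by simp
  moreover have "inv_into {1..kk} rr w \<in> {1..kk}" by (rule inv_into_into) fact
  ultimately show ?thesis unfolding idx_def by (simp add: f_inv_into_f)
qed

lemma rr_twinfree: "i \<in> {1..kk} \<Longrightarrow> j \<in> {1..kk} \<Longrightarrow> NX (rr i) = NX (rr j) \<Longrightarrow> i = j"
proof -
  assume a: "i \<in> {1..kk}" "j \<in> {1..kk}" "NX (rr i) = NX (rr j)"
  then have "rep (rr i) = rep (rr j)" using rep_eq a(3) by blast
  moreover have "rep (rr i) = rr i" "rep (rr j) = rr j" using rep_RR rr_RR a(1,2) by auto
  ultimately have "rr i = rr j" by simp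
  then show "i = j" using rr_inj a by blast
qed

definition Sa :: "'a \<Rightarrow> 'a set" where "Sa b = {p \<in> X. E p b}"

lemma minimal_ex:
  assumes b: "b \<in> A" and ne: "Sa b \<noteq> {}"
  shows "\<exists>p\<in>Sa b. \<forall>p'\<in>Sa b. NX p \<subseteq> NX p'"
proof -
  have fin: "finite (Sa b)" using finX unfolding Sa_def by simp
  obtain p where p: "p \<in> Sa b" and mn: "\<forall>u\<in>Sa b. card (NX p) \<le> card (NX u)"
    using exists_min[OF fin ne, of "\<lambda>u. card (NX u)"] by blast
  have "\<forall>p'\<in>Sa b. NX p \<subseteq> NX p'"
  proof
    fix p' assume p': "p' \<in> Sa b"
    show "NX p \<subseteq> NX p'"
    proof (cases "p' = p")
      case True then show ?thesis by simp
    next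
      case False
      have pX: "p \<in> X" "p' \<in> X" "E p b" "E p' b" using p p' unfolding Sa_def by auto
      then have "E p p'" using adj_if_common[OF pX(1,2) _ b] False by metis
      then have c: "NX p \<subseteq> NX p' \<or> NX p' \<subseteq> NX p" using TP pX by blast
      show ?thesis
      proof (rule ccontr)
        assume "\<not> NX p \<subseteq> NX p'"
        then have "NX p' \<subset> NX p" using c by blast
        then have "card (NX p') < card (NX p)"
          by (rule psubset_card_mono[OF finite_subset[OF NX_sub finX]])
        then show False using mn p' by fastforce
      qed
    qed
  qed
  then show ?thesis using p by blast
qed

definition mm :: "'a \<Rightarrow> 'a" where
  "mm b = (SOME p. p \<in> Sa b \<and> (\<forall>p'\<in>Sa b. NX p \<subseteq> NX p'))"

lemma mm_prop:
  assumes "b \<in> A" "Sa b \<noteq> {}"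
  shows "mm b \<in> X" "E (mm b) b" "\<And>p'. p' \<in> X \<Longrightarrow> E p' b \<Longrightarrow> NX (mm b) \<subseteq> NX p'"
proof -
  obtain p where "p \<in> Sa b \<and> (\<forall>p'\<in>Sa b. NX p \<subseteq> NX p')" using minimal_ex[OF assms] by blast
  then have "mm b \<in> Sa b \<and> (\<forall>p'\<in>Sa b. NX (mm b) \<subseteq> NX p')"
    unfolding mm_def by (rule someI)
  then show "mm b \<in> X" "E (mm b) b" "\<And>p'. p' \<in> X \<Longrightarrow> E p' b \<Longrightarrow> NX (mm b) \<subseteq> NX p'"
    unfolding Sa_def by auto
qed

definition qq :: "'a \<Rightarrow> nat" where
  "qq v = (if v \<in> X then idx (rep v) else if Sa v = {} then kk + 1 else kk + 1 + idx (rep (mm v)))"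

lemma qq_X:
  assumes "p \<in> X"
  shows "qq p \<in> {1..kk}" "rr (qq p) = rep p" "NX (rr (qq p)) = NX p"
proof -
  have "qq p = idx (rep p)" using assms unfolding qq_def by simp
  then show "qq p \<in> {1..kk}" "rr (qq p) = rep p" using idx_prop[OF rep_in_RR[OF assms]] by auto
  then show "NX (rr (qq p)) = NX p" using rep_prop[OF assms] by simp
qed

lemma qq_A0:
  assumes "b \<in> A" "Sa b = {}"
  shows "qq b = kk + 1"
  using assms AnX unfolding qq_def by simp

lemma qq_A:
  assumes "b \<in> A" "Sa b \<noteq> {}"
  obtains j where "qq b = kk + 1 + j" "j \<in> {1..kk}" "rr j = rep (mm b)" "NX (rr j) = NX (mm b)"
proof -
  have mX: "mm b \<in> X" using mm_prop assms by blast
  have "qq b = kk + 1 + idx (rep (mm b))" using assms AnX unfolding qq_def by simp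
  moreover have "idx (rep (mm b)) \<in> {1..kk}" "rr (idx (rep (mm b))) = rep (mm b)"
    using idx_prop[OF rep_in_RR[OF mX]] by auto
  moreover have "NX (rep (mm b)) = NX (mm b)" using rep_prop[OF mX] by simp
  ultimately show ?thesis using that by simp
qed

lemma qq_A_range: "b \<in> A \<Longrightarrow> kk < qq b \<and> qq b \<le> 2 * kk + 1"
proof -
  assume b: "b \<in> A"
  show ?thesis
  proof (cases "Sa b = {}")
    case True then show ?thesis using qq_A0[OF b] by simp
  next
    case False
    then obtain j where "qq b = kk + 1 + j" "j \<in> {1..kk}" using qq_A[OF b] by metis
    then show ?thesis by simp
  qed
qed

lemma qq_X_iff: "v \<in> V \<Longrightarrow> v \<in> X \<longleftrightarrow> qq v \<le> kk"
proof -
  assume "v \<in> V"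
  then consider "v \<in> X" | "v \<in> A" using VXA by blast
  then show ?thesis
  proof cases
    case 1 then show ?thesis using qq_X(1)[OF 1] by simp
  next
    case 2 then show ?thesis using qq_A_range[OF 2] AnX[OF 2] by simp
  qed
qed

end


lemma not_clique: "y \<in> S \<Longrightarrow> z \<in> S \<Longrightarrow> y \<noteq> z \<Longrightarrow> \<not> F y z \<Longrightarrow> \<not> clique_in S F"
  unfolding clique_in_def by blast

context cp begin

definition Gw :: "nat \<Rightarrow> nat \<Rightarrow> bool" where
  "Gw i j \<longleftrightarrow> 1 \<le> j \<and> (j = i \<or> prec (rr j) (rr i))"

definition Fw :: "nat \<Rightarrow> nat \<Rightarrow> bool" where
  "Fw u v \<longleftrightarrow> u \<noteq> v \<and> u \<in> {1..2*kk+1} \<and> v \<in> {1..2*kk+1} \<and>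
     ((u \<le> kk \<and> v \<le> kk \<and> E (rr u) (rr v)) \<or> (kk < u \<and> kk < v) \<or>
      (u \<le> kk \<and> kk < v \<and> Gw u (v - (kk+1))) \<or> (v \<le> kk \<and> kk < u \<and> Gw v (u - (kk+1))))"

abbreviation Xw :: "nat set" where "Xw \<equiv> {1..kk}"
definition aw :: "nat \<Rightarrow> nat" where "aw j = kk + 1 + j"
abbreviation AW :: "nat set" where "AW \<equiv> aw ` {0..kk}"

lemma Fw_sym: "Fw u v \<Longrightarrow> Fw v u"
  unfolding Fw_def using sym by blast

lemma Fw_irr: "\<not> Fw u u" unfolding Fw_def by simp

lemma graph_W: "graph {1..2*kk+1} Fw"
  unfolding graph_def using Fw_sym by (auto simp: Fw_def)

lemma Fw_X: "i \<in> Xw \<Longrightarrow> j \<in> Xw \<Longrightarrow> Fw i j \<longleftrightarrow> i \<noteq> j \<and> E (rr i) (rr j)"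
  unfolding Fw_def by auto

lemma Fw_XA: "i \<in> Xw \<Longrightarrow> j \<le> kk \<Longrightarrow> Fw i (kk + 1 + j) \<longleftrightarrow> Gw i j"
  unfolding Fw_def by auto

lemma Fw_AA: "i \<le> kk \<Longrightarrow> j \<le> kk \<Longrightarrow> i \<noteq> j \<Longrightarrow> Fw (kk + 1 + i) (kk + 1 + j)"
  unfolding Fw_def by auto

lemma AW_eq: "AW = {kk+1..2*kk+1}"
proof
  show "AW \<subseteq> {kk+1..2*kk+1}" unfolding aw_def by auto
  show "{kk+1..2*kk+1} \<subseteq> AW"
  proof
    fix b assume b: "b \<in> {kk+1..2*kk+1}"
    then have "b = aw (b - (kk+1))" "b - (kk+1) \<in> {0..kk}" unfolding aw_def by auto
    then show "b \<in> AW" by blast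
  qed
qed

lemma transfer_induced:
  assumes "has_induced Xw Fw n Rl"
  shows "has_induced X E n Rl"
proof -
  obtain f where f: "inj_on f {..<n}" "f ` {..<n} \<subseteq> Xw"
    "\<forall>i<n. \<forall>j<n. i \<noteq> j \<longrightarrow> (Fw (f i) (f j) \<longleftrightarrow> Rl i j)"
    using assms unfolding has_induced_def by blast
  have injr: "inj_on rr Xw" using rr_bij unfolding bij_betw_def by blast
  show ?thesis
    unfolding has_induced_def
  proof (intro exI[of _ "rr \<circ> f"] conjI)
    show "inj_on (rr \<circ> f) {..<n}"
      using comp_inj_on[OF f(1) inj_on_subset[OF injr f(2)]] .
    show "(rr \<circ> f) ` {..<n} \<subseteq> X" using f(2) rr_X by auto
    show "\<forall>i<n. \<forall>j<n. i \<noteq> j \<longrightarrow> E ((rr \<circ> f) i) ((rr \<circ> f) j) = Rl i j"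
    proof (intro allI impI)
      fix i j assume ij: "i < n" "j < n" "i \<noteq> j"
      then have "f i \<noteq> f j" using f(1) unfolding inj_on_def by auto
      moreover have "f i \<in> Xw" "f j \<in> Xw" using f(2) ij by auto
      ultimately have "Fw (f i) (f j) \<longleftrightarrow> E (rr (f i)) (rr (f j))" using Fw_X by blast
      then show "E ((rr \<circ> f) i) ((rr \<circ> f) j) = Rl i j" using f(3) ij by simp
    qed
  qed
qed

lemma inC_W: "in_C Xw Fw"
  using XC transfer_induced unfolding in_C_def P_free_def C_free_def twoP3_free_def by blast

lemma XwP4: "P_free 4 Xw Fw" using inC_W unfolding in_C_def by blast
lemma XwC4: "C_free 4 Xw Fw" using inC_W unfolding in_C_def by blast

lemma nb_w: "i \<in> Xw \<Longrightarrow> j \<in> Xw \<Longrightarrow> j \<in> nb Xw Fw i \<longleftrightarrow> rr j \<in> NX (rr i)"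
proof -
  assume ij: "i \<in> Xw" "j \<in> Xw"
  have "j = i \<longleftrightarrow> rr j = rr i" using rr_inj ij by blast
  moreover have "rr j \<in> X" using rr_X ij by blast
  ultimately show ?thesis using Fw_X[OF ij] ij unfolding nb_def by auto
qed

lemma nb_sub_w:
  assumes ij: "i \<in> Xw" "j \<in> Xw"
  shows "nb Xw Fw j \<subseteq> nb Xw Fw i \<longleftrightarrow> NX (rr j) \<subseteq> NX (rr i)"
proof
  assume H: "NX (rr j) \<subseteq> NX (rr i)"
  show "nb Xw Fw j \<subseteq> nb Xw Fw i"
  proof
    fix l assume l: "l \<in> nb Xw Fw j"
    then have lX: "l \<in> Xw" unfolding nb_def by simp
    then show "l \<in> nb Xw Fw i" using l H nb_w ij by blast
  qed
next
  assume H: "nb Xw Fw j \<subseteq> nb Xw Fw i"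
  show "NX (rr j) \<subseteq> NX (rr i)"
  proof
    fix w assume w: "w \<in> NX (rr j)"
    then have wX: "w \<in> X" unfolding nb_def by simp
    have rw: "rep w \<in> X" "NX (rep w) = NX w" using rep_prop[OF wX] by auto
    obtain l where l: "l \<in> Xw" "rr l = rep w" using idx_prop[OF rep_in_RR[OF wX]] by blast
    have rjX: "rr j \<in> X" "rr i \<in> X" using rr_X ij by auto
    have "rep w \<in> NX (rr j)" using closure[OF rjX(1) wX rw(1) w] rw(2) by simp
    then have "l \<in> nb Xw Fw j" using nb_w[OF ij(2) l(1)] l(2) by simp
    then have "l \<in> nb Xw Fw i" using H by blast
    then have "rep w \<in> NX (rr i)" using nb_w[OF ij(1) l(1)] l(2) by simp
    then show "w \<in> NX (rr i)" using closure[OF rjX(2) rw(1) wX] rw(2) by simp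
  qed
qed

lemma tdesc_w:
  assumes i: "i \<in> Xw"
  shows "tdesc Fw Xw i y \<longleftrightarrow> y \<in> Xw \<and> prec (rr y) (rr i)"
proof -
  have "tdesc Fw Xw i y \<longleftrightarrow> (i \<in> Xw \<and> y \<in> Xw \<and> y \<in> nb Xw Fw i \<and> nb Xw Fw y \<subset> nb Xw Fw i)"
    using tdesc_imp[of Fw Xw i y] tdesc_rev[of Xw Fw i y] Fw_sym Fw_irr XwP4 XwC4 by blast
  also have "\<dots> \<longleftrightarrow> y \<in> Xw \<and> prec (rr y) (rr i)"
  proof
    assume H: "i \<in> Xw \<and> y \<in> Xw \<and> y \<in> nb Xw Fw i \<and> nb Xw Fw y \<subset> nb Xw Fw i"
    then show "y \<in> Xw \<and> prec (rr y) (rr i)"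
      unfolding prec_def using nb_w[OF i, of y] nb_sub_w[OF i, of y] nb_sub_w[of y i] by blast
  next
    assume H: "y \<in> Xw \<and> prec (rr y) (rr i)"
    then show "i \<in> Xw \<and> y \<in> Xw \<and> y \<in> nb Xw Fw i \<and> nb Xw Fw y \<subset> nb Xw Fw i"
      unfolding prec_def using i nb_w[OF i, of y] nb_sub_w[OF i, of y] nb_sub_w[of y i] by blast
  qed
  finally show ?thesis .
qed

lemma basic_W: "basic_member Xw Fw"
  unfolding basic_member_def
proof (intro conjI allI impI)
  show "in_C Xw Fw" by (rule inC_W)
  fix N assume N: "tnode Fw Xw N"
  have H: "N \<noteq> {}" "N \<subseteq> Xw" "\<forall>u\<in>N. \<forall>v\<in>N. nb Xw Fw u = nb Xw Fw v"
    using tnode_prop[OF N Fw_sym Fw_irr _ XwP4 XwC4] by blast+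
  obtain n where n: "n \<in> N" using H(1) by blast
  have "\<forall>u\<in>N. u = n"
  proof
    fix u assume u: "u \<in> N"
    then have "nb Xw Fw u = nb Xw Fw n" using H(3) n by blast
    then have "NX (rr u) = NX (rr n)" using nb_sub_w[of u n] nb_sub_w[of n u] H(2) u n
      by (metis subset_antisym subsetD order_refl)
    then show "u = n" using rr_twinfree H(2) u n by blast
  qed
  then have "N = {n}" using n by blast
  then show "card N = 1" by simp
qed

lemma nbrA:
  assumes i: "i \<in> Xw"
  shows "nbr_in Fw AW i = aw ` {j \<in> Xw. j = i \<or> prec (rr j) (rr i)}"
proof
  show "nbr_in Fw AW i \<subseteq> aw ` {j \<in> Xw. j = i \<or> prec (rr j) (rr i)}"
  proof
    fix b assume "b \<in> nbr_in Fw AW i"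
    then obtain j where j: "j \<in> {0..kk}" "b = aw j" "Fw i (aw j)" unfolding nbr_in_def by blast
    then have "Gw i j" using Fw_XA[OF i] unfolding aw_def by simp
    then show "b \<in> aw ` {j \<in> Xw. j = i \<or> prec (rr j) (rr i)}" using j unfolding Gw_def by auto
  qed
  show "aw ` {j \<in> Xw. j = i \<or> prec (rr j) (rr i)} \<subseteq> nbr_in Fw AW i"
  proof
    fix b assume "b \<in> aw ` {j \<in> Xw. j = i \<or> prec (rr j) (rr i)}"
    then obtain j where j: "j \<in> Xw" "j = i \<or> prec (rr j) (rr i)" "b = aw j" by blast
    then have "Gw i j" unfolding Gw_def by simp
    then have "Fw i (aw j)" using Fw_XA[OF i] j unfolding aw_def by simp
    then show "b \<in> nbr_in Fw AW i" using j unfolding nbr_in_def by auto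
  qed
qed

lemma nbr_formula:
  assumes i: "i \<in> Xw"
  shows "nbr_in Fw AW i = {aw i} \<union> \<Union> {nbr_in Fw AW y | y. tdesc Fw Xw i y}"
proof -
  have "\<Union> {nbr_in Fw AW y | y. tdesc Fw Xw i y} = aw ` {j \<in> Xw. prec (rr j) (rr i)}"
  proof
    show "\<Union> {nbr_in Fw AW y | y. tdesc Fw Xw i y} \<subseteq> aw ` {j \<in> Xw. prec (rr j) (rr i)}"
    proof
      fix b assume "b \<in> \<Union> {nbr_in Fw AW y | y. tdesc Fw Xw i y}"
      then obtain y where y: "tdesc Fw Xw i y" "b \<in> nbr_in Fw AW y" by blast
      then have y2: "y \<in> Xw" "prec (rr y) (rr i)" using tdesc_w[OF i] by auto
      then obtain j where j: "j \<in> Xw" "j = y \<or> prec (rr j) (rr y)" "b = aw j"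
        using y(2) nbrA[OF y2(1)] by blast
      then have "prec (rr j) (rr i)" using y2 prec_trans by blast
      then show "b \<in> aw ` {j \<in> Xw. prec (rr j) (rr i)}" using j by blast
    qed
    show "aw ` {j \<in> Xw. prec (rr j) (rr i)} \<subseteq> \<Union> {nbr_in Fw AW y | y. tdesc Fw Xw i y}"
    proof
      fix b assume "b \<in> aw ` {j \<in> Xw. prec (rr j) (rr i)}"
      then obtain j where j: "j \<in> Xw" "prec (rr j) (rr i)" "b = aw j" by blast
      then have "tdesc Fw Xw i j" using tdesc_w[OF i] by simp
      moreover have "b \<in> nbr_in Fw AW j" using nbrA[OF j(1)] j by blast
      ultimately show "b \<in> \<Union> {nbr_in Fw AW y | y. tdesc Fw Xw i y}" by blast
    qed
  qed
  moreover have "{j \<in> Xw. j = i \<or> prec (rr j) (rr i)} = insert i {j \<in> Xw. prec (rr j) (rr i)}"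
    using i by blast
  ultimately show ?thesis using nbrA[OF i] by (simp only: image_insert) blast
qed

lemma tdesc_not_simplicial:
  assumes i: "i \<in> Xw" and t: "tdesc Fw Xw i y"
  shows "\<not> simplicial_in Xw Fw i"
proof -
  have H0: "i \<in> Xw \<and> y \<in> Xw \<and> y \<in> nb Xw Fw i \<and> nb Xw Fw y \<subset> nb Xw Fw i"
    by (rule tdesc_imp[OF t Fw_sym])
  note H = H0[THEN conjunct1] H0[THEN conjunct2, THEN conjunct1]
    H0[THEN conjunct2, THEN conjunct2, THEN conjunct1] H0[THEN conjunct2, THEN conjunct2, THEN conjunct2]
  obtain z where z: "z \<in> nb Xw Fw i" "z \<notin> nb Xw Fw y" using H(4) by blast
  have yi: "y \<noteq> i" using H(4) by blast
  then have Fiy: "Fw i y" using H(3) unfolding nb_def by simp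
  have "i \<in> nb Xw Fw y" using Fw_sym[OF Fiy] H(1) unfolding nb_def by blast
  then have zi: "z \<noteq> i" using z by blast
  then have Fiz: "Fw i z" "z \<in> Xw" using z unfolding nb_def by auto
  have zy: "z \<noteq> y" "\<not> Fw y z" using z Fiz(2) unfolding nb_def by auto
  have yz: "y \<in> {u \<in> Xw. Fw i u}" "z \<in> {u \<in> Xw. Fw i u}" using Fiy Fiz H(2) by auto
  have "\<not> clique_in {u \<in> Xw. Fw i u} Fw"
    by (rule not_clique[of y _ z Fw, OF yz zy(1)[symmetric] zy(2)])
  then show ?thesis unfolding simplicial_in_def .
qed

lemma basic_pair: "basic_C_pair {1..2*kk+1} Fw kk (\<lambda>i. i) aw"
  unfolding basic_C_pair_def
proof (intro conjI ballI impI)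
  show "graph {1..2*kk+1} Fw" by (rule graph_W)
  show "inj_on (\<lambda>i. i) Xw" by simp
  show "inj_on aw {0..kk}" unfolding aw_def inj_on_def by simp
  show "(\<lambda>i. i) ` Xw \<inter> AW = {}" unfolding AW_eq by auto
  show "{1..2*kk+1} = (\<lambda>i. i) ` Xw \<union> AW" unfolding AW_eq by auto
  show "clique_in AW Fw" unfolding clique_in_def aw_def using Fw_AA by auto
  show "basic_member ((\<lambda>i. i) ` Xw) Fw" using basic_W by simp
  fix i assume i: "i \<in> Xw"
  {
    assume s: "simplicial_in ((\<lambda>i. i) ` Xw) Fw i"
    then have "\<not> (\<exists>y. tdesc Fw Xw i y)" using tdesc_not_simplicial[OF i] by auto
    then show "nbr_in Fw AW i = {aw i}" using nbr_formula[OF i] by simp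
  }
  {
    assume "\<not> simplicial_in ((\<lambda>i. i) ` Xw) Fw i"
    show "nbr_in Fw AW i = {aw i} \<union> \<Union> {nbr_in Fw AW y | y. tdesc Fw ((\<lambda>i. i) ` Xw) i y}"
      using nbr_formula[OF i] by simp
  }
qed

end


lemma graded_sym:
  assumes sym: "\<And>u v. E u v \<Longrightarrow> E v u" and g: "graded_pair E P R"
  shows "graded_pair E R P"
  unfolding graded_pair_def
proof (intro conjI ballI)
  show "R \<inter> P = {}" using g unfolding graded_pair_def by blast
  fix r r' assume r: "r \<in> R" "r' \<in> R"
  show "{p \<in> P. E r p} \<subseteq> {p \<in> P. E r' p} \<or> {p \<in> P. E r' p} \<subseteq> {p \<in> P. E r p}"
  proof (rule ccontr)
    assume "\<not> ?thesis"
    then obtain p p' where p: "p \<in> P" "E r p" "\<not> E r' p" and p': "p' \<in> P" "E r' p'" "\<not> E r p'"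
      by blast
    have c: "{x \<in> R. E p x} \<subseteq> {x \<in> R. E p' x} \<or> {x \<in> R. E p' x} \<subseteq> {x \<in> R. E p x}"
      using g p(1) p'(1) unfolding graded_pair_def by blast
    have "E p r" "\<not> E p r'" "E p' r'" "\<not> E p' r" using p p' sym by blast+
    then show False using c r by blast
  qed
qed

context cp begin

definition II :: "nat set" where
  "II = {i \<in> Xw. \<exists>p\<in>V. \<exists>b\<in>V. qq p = i \<and> qq b = kk + 1 + i \<and> \<not> E p b}"

definition MM :: "nat set set" where
  "MM = {{i, aw i} | i. i \<in> II}"

lemma qq_W: "v \<in> V \<Longrightarrow> qq v \<in> {1..2*kk+1}"
  using qq_X(1) qq_A_range VXA by fastforce

lemma fiberX: "p \<in> V \<Longrightarrow> qq p \<le> kk \<Longrightarrow> p \<in> X" using qq_X_iff by blast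
lemma fiberA: "p \<in> V \<Longrightarrow> kk < qq p \<Longrightarrow> p \<in> A" using qq_X_iff VXA by fastforce

lemma XX:
  assumes p: "p \<in> X" "p' \<in> X" and ne: "qq p \<noteq> qq p'"
  shows "Fw (qq p) (qq p') \<longleftrightarrow> E p p'"
proof -
  have i: "qq p \<in> Xw" "qq p' \<in> Xw" using qq_X p by auto
  have n: "NX (rr (qq p)) = NX p" "NX (rr (qq p')) = NX p'" using qq_X p by auto
  have d: "NX (rr (qq p)) \<noteq> NX (rr (qq p'))" using rr_twinfree i ne by blast
  have "E (rr (qq p)) (rr (qq p')) \<longleftrightarrow> E p p'"
    using cross_edge[OF rr_X[OF i(1)] p(1) rr_X[OF i(2)] p(2) n d] .
  then show ?thesis using Fw_X[OF i] ne by simp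
qed

lemma XA_non:
  assumes p: "p \<in> X" and b: "b \<in> A" and e: "E p b"
  shows "Fw (qq p) (qq b)"
proof -
  have Sa: "Sa b \<noteq> {}" using p e unfolding Sa_def by blast
  obtain j where j: "qq b = kk + 1 + j" "j \<in> Xw" "NX (rr j) = NX (mm b)"
    using qq_A[OF b Sa] by metis
  have m: "mm b \<in> X" "E (mm b) b" "NX (mm b) \<subseteq> NX p" using mm_prop[OF b Sa] p e by auto
  let ?i = "qq p"
  have i: "?i \<in> Xw" "NX (rr ?i) = NX p" using qq_X p by auto
  have "Gw ?i j"
  proof (cases "NX (mm b) = NX p")
    case True
    then have "NX (rr j) = NX (rr ?i)" using j i by simp
    then have "j = ?i" using rr_twinfree j(2) i(1) by blast
    then show ?thesis unfolding Gw_def using j(2) by simp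
  next
    case False
    then have st: "NX (mm b) \<subset> NX p" using m by blast
    have "mm b \<noteq> p" using False by blast
    then have "E (mm b) p" using adj_if_common[OF m(1) p _ b m(2) e] by blast
    then have "mm b \<in> NX p" using m(1) sym unfolding nb_def by blast
    then have "prec (mm b) p" unfolding prec_def using st by blast
    then have "prec (rr j) (rr ?i)"
      using prec_cong[OF rr_X[OF i(1)] p rr_X[OF j(2)] m(1) i(2) j(3)] by simp
    then show ?thesis unfolding Gw_def using j(2) by simp
  qed
  then show ?thesis using Fw_XA[OF i(1), of j] j by simp
qed

lemma XA_comp:
  assumes p: "p \<in> X" and b: "b \<in> A" and F: "Fw (qq p) (qq b)" and M: "{qq p, qq b} \<notin> MM"
  shows "E p b"
proof -
  let ?i = "qq p"
  have i: "?i \<in> Xw" "NX (rr ?i) = NX p" using qq_X p by auto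
  have Sa: "Sa b \<noteq> {}"
  proof
    assume "Sa b = {}"
    then have "qq b = kk + 1 + 0" using qq_A0[OF b] by simp
    then have "Gw ?i 0" using F Fw_XA[OF i(1), of 0] by simp
    then show False unfolding Gw_def by simp
  qed
  obtain j where j: "qq b = kk + 1 + j" "j \<in> Xw" "NX (rr j) = NX (mm b)"
    using qq_A[OF b Sa] by metis
  have m: "mm b \<in> X" "E (mm b) b" using mm_prop[OF b Sa] by auto
  have G: "Gw ?i j" using F Fw_XA[OF i(1), of j] j by simp
  show ?thesis
  proof (cases "j = ?i")
    case True
    have "?i \<notin> II"
    proof
      assume "?i \<in> II"
      then have "{?i, aw ?i} \<in> MM" unfolding MM_def by blast
      then show False using M j True unfolding aw_def by simp
    qed
    moreover have "p \<in> V" "b \<in> V" using p b VXA by auto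
    ultimately show ?thesis using i(1) j(1) True unfolding II_def by blast
  next
    case False
    then have "prec (rr j) (rr ?i)" using G unfolding Gw_def by simp
    then have pr: "prec (mm b) p"
      using prec_cong[OF rr_X[OF i(1)] p rr_X[OF j(2)] m(1) i(2) j(3)] by simp
    then have "NA (mm b) \<subseteq> NA p" using F3[OF p m(1)] unfolding prec_def by blast
    then show ?thesis using m(2) b unfolding NA_def by blast
  qed
qed

lemma L_non:
  assumes "p \<in> V" "p' \<in> V" "qq p \<noteq> qq p'" "E p p'"
  shows "Fw (qq p) (qq p')"
proof -
  consider "p \<in> X" "p' \<in> X" | "p \<in> X" "p' \<in> A" | "p \<in> A" "p' \<in> X" | "p \<in> A" "p' \<in> A"
    using assms(1,2) VXA by blast
  then show ?thesis
  proof cases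
    case 1 then show ?thesis using XX assms by blast
  next
    case 2 then show ?thesis using XA_non assms(4) by blast
  next
    case 3
    have "E p' p" using assms(4) sym by blast
    then show ?thesis using XA_non[OF 3(2) 3(1)] Fw_sym by blast
  next
    case 4
    then have "kk < qq p" "kk < qq p'" "qq p \<le> 2*kk+1" "qq p' \<le> 2*kk+1" using qq_A_range by auto
    then show ?thesis unfolding Fw_def using assms(3) by auto
  qed
qed

lemma L_comp:
  assumes "p \<in> V" "p' \<in> V" "qq p \<noteq> qq p'" "Fw (qq p) (qq p')" "{qq p, qq p'} \<notin> MM"
  shows "E p p'"
proof -
  consider "p \<in> X" "p' \<in> X" | "p \<in> X" "p' \<in> A" | "p \<in> A" "p' \<in> X" | "p \<in> A" "p' \<in> A"
    using assms(1,2) VXA by blast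
  then show ?thesis
  proof cases
    case 1 then show ?thesis using XX assms by blast
  next
    case 2 then show ?thesis using XA_comp assms(4,5) by blast
  next
    case 3
    have "{qq p', qq p} \<notin> MM" using assms(5) by (simp add: insert_commute)
    then have "E p' p" using XA_comp[OF 3(2) 3(1) Fw_sym[OF assms(4)]] by blast
    then show ?thesis using sym by blast
  next
    case 4
    then show ?thesis using Aadj assms(3) by metis
  qed
qed

lemma fiber_clique: "clique_in {v \<in> V. qq v = w} E"
  unfolding clique_in_def
proof (intro ballI impI)
  fix u v assume u: "u \<in> {v \<in> V. qq v = w}" and v: "v \<in> {v \<in> V. qq v = w}" and uv: "u \<noteq> v"
  consider "u \<in> X" "v \<in> X" | "u \<in> A" "v \<in> A" | "u \<in> X" "v \<in> A" | "u \<in> A" "v \<in> X"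
    using u v VXA by blast
  then show "E u v"
  proof cases
    case 1
    then have "NX u = NX v" using qq_X(3)[of u] qq_X(3)[of v] u v by auto
    then show ?thesis using twin_adj 1 uv by blast
  next
    case 2 then show ?thesis using Aadj uv by blast
  next
    case 3 then show ?thesis using qq_X(1)[of u] qq_A_range[of v] u v by auto
  next
    case 4 then show ?thesis using qq_X(1)[of v] qq_A_range[of u] u v by auto
  qed
qed

lemma graded_M:
  assumes i: "i \<in> II"
  shows "graded_pair E {v \<in> V. qq v = i} {v \<in> V. qq v = aw i}"
  unfolding graded_pair_def
proof (intro conjI ballI)
  show "{v \<in> V. qq v = i} \<inter> {v \<in> V. qq v = aw i} = {}" unfolding aw_def by auto
  have iX: "i \<in> Xw" using i unfolding II_def by blast
  fix p p' assume p: "p \<in> {v \<in> V. qq v = i}" and p': "p' \<in> {v \<in> V. qq v = i}"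
  have pX: "p \<in> X" "p' \<in> X" using p p' fiberX iX by auto
  let ?R = "{v \<in> V. qq v = aw i}"
  have RA: "?R \<subseteq> A" using fiberA unfolding aw_def by auto
  show "{r \<in> ?R. E p r} \<subseteq> {r \<in> ?R. E p' r} \<or> {r \<in> ?R. E p' r} \<subseteq> {r \<in> ?R. E p r}"
  proof (cases "p = p'")
    case True then show ?thesis by simp
  next
    case False
    have "NX p = NX p'" using qq_X(3)[OF pX(1)] qq_X(3)[OF pX(2)] p p' by auto
    then have "E p p'" using twin_adj pX False by blast
    then have "NA p \<subseteq> NA p' \<or> NA p' \<subseteq> NA p" using F1 pX by blast
    then show ?thesis using RA unfolding NA_def by blast
  qed
qed

lemma II_clique:
  assumes i: "i \<in> II" and i': "i' \<in> II" and ne: "i \<noteq> i'"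
  shows "Fw i i'"
proof (rule ccontr)
  assume nF: "\<not> Fw i i'"
  have iX: "i \<in> Xw" "i' \<in> Xw" using i i' unfolding II_def by auto
  have nE: "\<not> E (rr i) (rr i')" using nF Fw_X[OF iX] ne by simp
  have dN: "NX (rr i) \<noteq> NX (rr i')" using rr_twinfree iX ne by blast
  have cross: "\<not> E u v" if "u \<in> X" "v \<in> X" "NX u = NX (rr i)" "NX v = NX (rr i')" for u v
    using cross_edge[OF rr_X[OF iX(1)] that(1) rr_X[OF iX(2)] that(2) that(3)[symmetric] that(4)[symmetric] dN] nE
    by simp
  have get: "\<exists>p m a. p \<in> X \<and> m \<in> X \<and> a \<in> A \<and> NX p = NX (rr l) \<and> NX m = NX (rr l) \<and>
      E m a \<and> \<not> E p a \<and> qq a = kk + 1 + l \<and> p \<noteq> m \<and> E p m \<and>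
      (\<forall>u\<in>X. E u a \<longrightarrow> NX m \<subseteq> NX u)"
    if l: "l \<in> II" for l
  proof -
    obtain p a where pa: "p \<in> V" "a \<in> V" "qq p = l" "qq a = kk + 1 + l" "\<not> E p a" "l \<in> Xw"
      using l unfolding II_def by blast
    have pX: "p \<in> X" using fiberX pa by auto
    have aA: "a \<in> A" using fiberA pa by auto
    have Sa: "Sa a \<noteq> {}"
    proof
      assume "Sa a = {}"
      then have "qq a = kk + 1" using qq_A0[OF aA] by simp
      then show False using pa by simp
    qed
    obtain j where j: "qq a = kk + 1 + j" "j \<in> Xw" "NX (rr j) = NX (mm a)"
      using qq_A[OF aA Sa] by metis
    have jl: "j = l" using j(1) pa(4) by simp
    have m: "mm a \<in> X" "E (mm a) a" "\<forall>u\<in>X. E u a \<longrightarrow> NX (mm a) \<subseteq> NX u"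
      using mm_prop[OF aA Sa] by auto
    have np: "NX p = NX (rr l)" using qq_X(3)[OF pX] pa(3) by simp
    have pm: "p \<noteq> mm a" using m(2) pa(5) by blast
    have "NX p = NX (mm a)" using np j(3) jl by simp
    then have "E p (mm a)" using twin_adj pX m(1) pm by blast
    then show ?thesis using pX m aA np j(3) jl pa(4,5) pm by (intro exI[of _ p] exI[of _ "mm a"] exI[of _ a]) auto
  qed
  obtain p m a where A1: "p \<in> X" "m \<in> X" "a \<in> A" "NX p = NX (rr i)" "NX m = NX (rr i)"
      "E m a" "\<not> E p a" "qq a = kk + 1 + i" "p \<noteq> m" "E p m" "\<forall>u\<in>X. E u a \<longrightarrow> NX m \<subseteq> NX u"
    using get[OF i] by blast
  obtain p' m' b where A2: "p' \<in> X" "m' \<in> X" "b \<in> A" "NX p' = NX (rr i')" "NX m' = NX (rr i')"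
      "E m' b" "\<not> E p' b" "qq b = kk + 1 + i'" "p' \<noteq> m'" "E p' m'" "\<forall>u\<in>X. E u b \<longrightarrow> NX m' \<subseteq> NX u"
    using get[OF i'] by blast
  have ab: "a \<noteq> b" using A1(8) A2(8) ne by auto
  have Eab: "E a b" using Aadj A1(3) A2(3) ab by blast
  have c1: "\<not> E p m'" "\<not> E p p'" "\<not> E m m'" "\<not> E m p'"
    using cross A1(1,2,4,5) A2(1,2,4,5) by auto
  have d1: "p \<noteq> m'" "p \<noteq> p'" "m \<noteq> m'" "m \<noteq> p'" using A1(4,5) A2(4,5) dN by auto
  have nb1: "\<not> E u b" if "u \<in> X" "NX u = NX (rr i)" for u
  proof
    assume e: "E u b"
    have "u \<noteq> m'" using that A2(5) dN by auto
    then have "E u m'" using adj_if_common[OF that(1) A2(2) _ A2(3) e A2(6)] by blast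
    then show False using cross[OF that(1) A2(2) that(2) A2(5)] by blast
  qed
  have nb2: "\<not> E u a" if "u \<in> X" "NX u = NX (rr i')" for u
  proof
    assume e: "E u a"
    have "u \<noteq> m" using that A1(5) dN by auto
    then have "E u m" using adj_if_common[OF that(1) A1(2) _ A1(3) e A1(6)] by blast
    then have "E m u" using sym by blast
    then show False using cross[OF A1(2) that(1) A1(5) that(2)] by blast
  qed
  have n2: "\<not> E p b" "\<not> E m b" using nb1 A1(1,2,4,5) by auto
  have n3: "\<not> E p' a" "\<not> E m' a" using nb2 A2(1,2,4,5) by auto
  have n4: "\<not> E a m'" "\<not> E a p'" using n3 sym by blast+
  have n5: "\<not> E b p'" using A2(7) sym by blast
  have e5: "E b m'" "E m' p'" using A2(6,10) sym by blast+
  have XAd: "p \<noteq> a" "p \<noteq> b" "m \<noteq> a" "m \<noteq> b" "a \<noteq> m'" "a \<noteq> p'" "b \<noteq> m'" "b \<noteq> p'"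
    using A1(1,2,3) A2(1,2,3) XA by blast+
  have "m' \<noteq> p'" using A2(9) by simp
  then have dist: "distinct [p, m, a, b, m', p']" using A1(9) d1 XAd ab by auto
  have V: "p \<in> V" "m \<in> V" "a \<in> V" "b \<in> V" "m' \<in> V" "p' \<in> V" using A1 A2 VXA by auto
  show False
    by (rule P6_contra[OF p6 V sym dist A1(10) A1(6) Eab e5 A1(7) n2(1) c1(1) c1(2) n2(2) c1(3) c1(4) n4 n5])
qed

theorem main_cp:
  "\<exists>(W :: nat set) F k x a M. basic_C_pair W F k x a \<and> acceptable F k x a M \<and>
           augmentation V E W F M"
proof (intro exI conjI)
  show "basic_C_pair {1..2*kk+1} Fw kk (\<lambda>i. i) aw" by (rule basic_pair)
  show "acceptable Fw kk (\<lambda>i. i) aw MM"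
    unfolding acceptable_def
  proof (intro exI[of _ II] conjI)
    show "II \<subseteq> {1..kk}" unfolding II_def by blast
    show "clique_in ((\<lambda>i. i) ` II) Fw" unfolding clique_in_def using II_clique by simp
    show "MM = {{i, aw i} | i. i \<in> II}" unfolding MM_def by simp
  qed
  show "augmentation V E {1..2*kk+1} Fw MM"
    unfolding augmentation_def
  proof (intro exI[of _ qq] conjI)
    show "\<forall>v\<in>V. qq v \<in> {1..2*kk+1}" using qq_W by blast
    show "\<forall>w\<in>{1..2*kk+1}. clique_in {v \<in> V. qq v = w} E" using fiber_clique by blast
    show "\<forall>u\<in>{1..2*kk+1}. \<forall>w\<in>{1..2*kk+1}. u \<noteq> w \<longrightarrow>
        (Fw u w \<and> {u, w} \<notin> MM \<longrightarrow> (\<forall>p\<in>V. \<forall>p'\<in>V. qq p = u \<longrightarrow> qq p' = w \<longrightarrow> E p p')) \<and>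
        (\<not> Fw u w \<longrightarrow> (\<forall>p\<in>V. \<forall>p'\<in>V. qq p = u \<longrightarrow> qq p' = w \<longrightarrow> \<not> E p p')) \<and>
        ({u, w} \<in> MM \<longrightarrow> graded_pair E {v \<in> V. qq v = u} {v \<in> V. qq v = w})"
    proof (intro ballI impI)
    fix u w assume uw: "u \<in> {1..2*kk+1}" "w \<in> {1..2*kk+1}" "u \<noteq> w"
    have c1: "\<forall>p\<in>V. \<forall>p'\<in>V. qq p = u \<longrightarrow> qq p' = w \<longrightarrow> E p p'" if "Fw u w \<and> {u, w} \<notin> MM"
      using L_comp that uw(3) by blast
    have c2: "\<forall>p\<in>V. \<forall>p'\<in>V. qq p = u \<longrightarrow> qq p' = w \<longrightarrow> \<not> E p p'" if "\<not> Fw u w"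
      using L_non that uw(3) by blast
    have c3: "graded_pair E {v \<in> V. qq v = u} {v \<in> V. qq v = w}" if M: "{u, w} \<in> MM"
    proof -
      obtain i where i: "i \<in> II" "{u, w} = {i, aw i}" using M unfolding MM_def by blast
      then consider "u = i" "w = aw i" | "u = aw i" "w = i" by (metis doubleton_eq_iff)
      then show ?thesis
      proof cases
        case 1 then show ?thesis using graded_M[OF i(1)] by simp
      next
        case 2 then show ?thesis using graded_sym[OF sym graded_M[OF i(1)]] by simp
      qed
    qed
    show "(Fw u w \<and> {u, w} \<notin> MM \<longrightarrow> (\<forall>p\<in>V. \<forall>p'\<in>V. qq p = u \<longrightarrow> qq p' = w \<longrightarrow> E p p')) \<and>
        (\<not> Fw u w \<longrightarrow> (\<forall>p\<in>V. \<forall>p'\<in>V. qq p = u \<longrightarrow> qq p' = w \<longrightarrow> \<not> E p p')) \<and>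
        ({u, w} \<in> MM \<longrightarrow> graded_pair E {v \<in> V. qq v = u} {v \<in> V. qq v = w})"
      using c1 c2 c3 by blast
    qed
  qed
qed

end

theorem theorem2p6:
  fixes V :: "'a set" and E :: "'a \<Rightarrow> 'a \<Rightarrow> bool"
  assumes "C_pair V E"
  shows "\<exists>(W :: nat set) F k x a M. basic_C_pair W F k x a \<and> acceptable F k x a M \<and>
           augmentation V E W F M"
proof -
  obtain X A where H: "graph V E" "P_free 6 V E" "chordal V E" "X \<inter> A = {}" "V = X \<union> A"
      "clique_in A E" "in_C X E" "\<forall>x\<in>X. \<exists>a\<in>A. E x a"
      "\<forall>x\<in>X. \<forall>x'\<in>X. x \<noteq> x' \<and> \<not> E x x' \<longrightarrow> \<not> (\<exists>a\<in>A. E x a \<and> E x' a)"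
    using assms unfolding C_pair_def by blast
  interpret cp V E X A
    by (rule cp.intro) (fact H)+
  show ?thesis by (rule main_cp)
qed

end
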